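(* For $n\ge 1$, the friendship graph $F_n$ satisfies $\nu^*(F_n)=17n^2+n$.
   Context: For a finite simple graph $G=(V,E)$ with $\ell=|V|+|E|$, a construction sequence (c-sequence) is a bijection $x:\{1,\dots,\ell\}\to V\sqcup E$ such that every edge $e=uw$ satisfies $x^{-1}(e)>\max\{x^{-1}(u),x^{-1}(w)\}$. The cost of $x$ is $\nu(x)=\sum_{e=uw\in E}\big(2x^{-1}(e)-x^{-1}(u)-x^{-1}(w)\big)$, and $\nu^*(G)$ is the maximum of $\nu(x)$ over all c-sequences for $G$. The friendship graph $F_n$ is the wedge of $n$ triangles sharing exactly one common vertex (so it has $2n+1$ vertices and $3n$ edges). *)

theory Defs
  imports Main
begin

text \<open>A finite simple graph is given by a finite vertex set V and a set E of
  2-element subsets of V. The ground set is the disjoint union V + E, encoded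
  as Inl ` V \<union> Inr ` E.\<close>

definition simple_graph :: "'v set \<Rightarrow> 'v set set \<Rightarrow> bool" where
  "simple_graph V E \<longleftrightarrow> finite V \<and> (\<forall>e\<in>E. e \<subseteq> V \<and> card e = 2)"

definition glen :: "'v set \<Rightarrow> 'v set set \<Rightarrow> nat" where
  "glen V E = card V + card E"

definition pos :: "'v set \<Rightarrow> 'v set set \<Rightarrow> (nat \<Rightarrow> 'v + 'v set) \<Rightarrow> ('v + 'v set) \<Rightarrow> nat" where
  "pos V E x a = the_inv_into {1..glen V E} x a"

definition cseq :: "'v set \<Rightarrow> 'v set set \<Rightarrow> (nat \<Rightarrow> 'v + 'v set) \<Rightarrow> bool" where
  "cseq V E x \<longleftrightarrow> bij_betw x {1..glen V E} (Inl ` V \<union> Inr ` E) \<and>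
     (\<forall>e\<in>E. \<forall>u\<in>e. pos V E x (Inl u) < pos V E x (Inr e))"

definition cost :: "'v set \<Rightarrow> 'v set set \<Rightarrow> (nat \<Rightarrow> 'v + 'v set) \<Rightarrow> int" where
  "cost V E x = (\<Sum>e\<in>E. 2 * int (pos V E x (Inr e)) - (\<Sum>u\<in>e. int (pos V E x (Inl u))))"

definition nu_star :: "'v set \<Rightarrow> 'v set set \<Rightarrow> int" where
  "nu_star V E = Max {cost V E x | x. cseq V E x}"

text \<open>Friendship graph F_n: centre 0, triangles {0, 2k-1, 2k} for k = 1..n.\<close>
definition friendV :: "nat \<Rightarrow> nat set" where
  "friendV n = {0..2*n}"

definition friendE :: "nat \<Rightarrow> nat set set" where
  "friendE n = {{0, i} | i. i \<in> {1..2*n}} \<union> {{2*k - 1, 2*k} | k. k \<in> {1..n}}"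

end

theory Submission
  imports Defs
begin

lemma E_eq: "friendE n = (\<lambda>i. {0,i}) ` {1..2*n} \<union> (\<lambda>k. {2*k-1,2*k}) ` {1..n}"
  unfolding friendE_def by auto

lemma inj_sp: "inj_on (\<lambda>i::nat. {0,i}) {1..2*n}"
  by (auto simp: inj_on_def doubleton_eq_iff)

lemma inj_bs: "inj_on (\<lambda>k::nat. {2*k-1,2*k}) {1..n}"
  by (auto simp: inj_on_def doubleton_eq_iff)

lemma disj_E: "(\<lambda>i::nat. {0,i}) ` {1..2*n} \<inter> (\<lambda>k. {2*k-1,2*k}) ` {1..n} = {}"
  by (auto simp: doubleton_eq_iff)

lemma card_E: "card (friendE n) = 3*n"
proof -
  have "card (friendE n) = card ((\<lambda>i::nat. {0,i}) ` {1..2*n}) + card ((\<lambda>k. {2*k-1,2*k}) ` {1..n})"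
    unfolding E_eq by (rule card_Un_disjoint) (use disj_E in auto)
  also have "\<dots> = 2*n + n" using card_image[OF inj_sp] card_image[OF inj_bs] by simp
  finally show ?thesis by simp
qed

lemma pair_sum: "(\<Sum>k=1..n. (f (2*k-1) + f (2*k) :: int)) = (\<Sum>i=1..2*n. f (i::nat))"
proof (induction n)
  case 0 then show ?case by simp
next
  case (Suc n)
  have "{1..2*Suc n} = insert (2*n+2) (insert (2*n+1) {1..2*n})" by auto
  then have "(\<Sum>i=1..2*Suc n. f i) = f (2*n+2) + f (2*n+1) + (\<Sum>i=1..2*n. f i)" by simp
  then show ?case using Suc by simp
qed

lemma cost_formula:
  fixes q :: "nat + nat set \<Rightarrow> nat"
  shows "(\<Sum>e\<in>friendE n. 2 * int (q (Inr e)) - (\<Sum>u\<in>e. int (q (Inl u))))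
    = 2 * (\<Sum>e\<in>friendE n. int (q (Inr e))) - 2 * int n * int (q (Inl 0)) - 2 * (\<Sum>i=1..2*n. int (q (Inl i)))"
proof -
  let ?g = "\<lambda>e. (\<Sum>u\<in>e. int (q (Inl u)))"
  have split: "(\<Sum>e\<in>friendE n. h e) = (\<Sum>i=1..2*n. h {0,i}) + (\<Sum>k=1..n. h {2*k-1,2*k})" for h :: "nat set \<Rightarrow> int"
  proof -
    have "(\<Sum>e\<in>friendE n. h e) = (\<Sum>e\<in>(\<lambda>i::nat. {0,i}) ` {1..2*n}. h e) + (\<Sum>e\<in>(\<lambda>k. {2*k-1,2*k}) ` {1..n}. h e)"
      unfolding E_eq by (rule sum.union_disjoint) (use disj_E in auto)
    also have "\<dots> = (\<Sum>i=1..2*n. h {0,i}) + (\<Sum>k=1..n. h {2*k-1,2*k})"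
      by (subst sum.reindex[OF inj_sp], subst sum.reindex[OF inj_bs]) simp
    finally show ?thesis .
  qed
  have a: "(\<Sum>i=1..2*n. ?g {0,i}) = (\<Sum>i=1..2*n. int (q (Inl 0)) + int (q (Inl i)))"
    by (rule sum.cong) auto
  have b: "(\<Sum>k=1..n. ?g {2*k-1,2*k}) = (\<Sum>k=1..n. int (q (Inl (2*k-1))) + int (q (Inl (2*k))))"
    by (rule sum.cong) auto
  have "(\<Sum>e\<in>friendE n. 2 * int (q (Inr e)) - ?g e) = 2 * (\<Sum>e\<in>friendE n. int (q (Inr e))) - (\<Sum>e\<in>friendE n. ?g e)"
    by (simp add: sum_subtractf sum_distrib_left)
  also have "(\<Sum>e\<in>friendE n. ?g e) = 2 * int n * int (q (Inl 0)) + 2 * (\<Sum>i=1..2*n. int (q (Inl i)))"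
    unfolding split a b pair_sum[where f="\<lambda>i. int (q (Inl i))"] by (simp add: sum.distrib)
  finally show ?thesis by simp
qed

lemma sum_distinct_ge:
  "finite (A::nat set) \<Longrightarrow> 0 \<notin> A \<Longrightarrow> card A = k \<Longrightarrow> (\<Sum>{1..k}) \<le> (\<Sum>A :: nat)"
proof (induction k arbitrary: A)
  case 0 then show ?case by simp
next
  case (Suc k A)
  have ne: "A \<noteq> {}" using Suc.prems(3) by auto
  let ?m = "Max A"
  have mA: "?m \<in> A" using Max_in Suc.prems(1) ne by blast
  have "A \<subseteq> {1..?m}"
  proof
    fix a assume aA: "a \<in> A"
    have "a \<le> ?m" using Max_ge Suc.prems(1) aA by blast
    moreover have "a \<noteq> 0" using Suc.prems(2) aA by metis
    ultimately show "a \<in> {1..?m}" by simp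
  qed
  then have "card A \<le> card {1..?m}" by (intro card_mono) simp_all
  then have "Suc k \<le> ?m" using Suc.prems(3) by simp
  have c: "card (A - {?m}) = k" using Suc.prems(3) mA Suc.prems(1) by (simp add: card_Diff_singleton)
  have "(\<Sum>{1..k}) \<le> \<Sum>(A - {?m})"
    using Suc.IH[of "A - {?m}"] Suc.prems(1,2) c by blast
  moreover have "\<Sum>A = ?m + \<Sum>(A - {?m})" using sum.remove[OF Suc.prems(1) mA, of id] by simp
  moreover have "(\<Sum>{1..Suc k}) = Suc k + \<Sum>{1..k}" by simp
  ultimately show ?case using \<open>Suc k \<le> ?m\<close> by linarith
qed

lemma gauss2: "2 * (\<Sum>{1..m::nat}) = m * (m+1)"
  by (induction m) auto

lemma gauss_int: "2 * int (\<Sum>{1..m}) = int m * (int m + 1)"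
  by (induction m) (simp_all add: algebra_simps)

lemma card_V: "card (friendV n) = 2*n+1"
  unfolding friendV_def by simp

lemma glen_F: "glen (friendV n) (friendE n) = 5*n+1"
  unfolding glen_def card_V card_E by simp

lemma V_eq: "friendV n = insert 0 {1..2*n}"
  unfolding friendV_def by auto

lemma finE: "finite (friendE n)"
  unfolding E_eq by simp

lemma sumG:
  fixes q :: "nat + nat set \<Rightarrow> nat"
  assumes "bij_betw q (Inl ` friendV n \<union> Inr ` friendE n) {1..5*n+1}"
  shows "(\<Sum>v\<in>friendV n. q (Inl v)) + (\<Sum>e\<in>friendE n. q (Inr e)) = \<Sum>{1..5*n+1}"
proof -
  have "(\<Sum>a\<in>Inl ` friendV n \<union> Inr ` friendE n. q a) = \<Sum>{1..5*n+1}"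
    using sum.reindex_bij_betw[OF assms, of id] by simp
  moreover have "(\<Sum>a\<in>Inl ` friendV n \<union> Inr ` friendE n. q a)
     = (\<Sum>a\<in>Inl ` friendV n. q a) + (\<Sum>a\<in>Inr ` friendE n. q a)"
    by (rule sum.union_disjoint) (auto simp: friendV_def finE)
  moreover have "(\<Sum>a\<in>Inl ` friendV n. q a) = (\<Sum>v\<in>friendV n. q (Inl v))"
    by (simp add: sum.reindex)
  moreover have "(\<Sum>a\<in>Inr ` friendE n. q a) = (\<Sum>e\<in>friendE n. q (Inr e))"
    by (simp add: sum.reindex)
  ultimately show ?thesis by simp
qed

lemma cost_gen:
  fixes q :: "nat + nat set \<Rightarrow> nat"
  assumes "bij_betw q (Inl ` friendV n \<union> Inr ` friendE n) {1..5*n+1}"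
  shows "(\<Sum>e\<in>friendE n. 2 * int (q (Inr e)) - (\<Sum>u\<in>e. int (q (Inl u))))
    = int (2 * \<Sum>{1..5*n+1}) - (2 * int n + 2) * int (q (Inl 0)) - 4 * (\<Sum>i=1..2*n. int (q (Inl i)))"
proof -
  have s: "(\<Sum>v\<in>friendV n. q (Inl v)) = q (Inl 0) + (\<Sum>i=1..2*n. q (Inl i))"
    unfolding V_eq by simp
  have h: "int (q (Inl 0) + (\<Sum>i=1..2*n. q (Inl i)) + (\<Sum>e\<in>friendE n. q (Inr e))) = int (\<Sum>{1..5*n+1})"
    using sumG[OF assms] s by simp
  have "int (q (Inl 0)) + (\<Sum>i=1..2*n. int (q (Inl i))) + (\<Sum>e\<in>friendE n. int (q (Inr e))) = int (\<Sum>{1..5*n+1})"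
    using h by (simp only: of_nat_add of_nat_sum)
  moreover have "(2 * int n + 2) * int (q (Inl 0)) = 2 * int n * int (q (Inl 0)) + 2 * int (q (Inl 0))"
    by (simp add: distrib_right)
  moreover have "int (2 * \<Sum>{1..5*n+1}) = 2 * int (\<Sum>{1..5*n+1})" by simp
  ultimately show ?thesis unfolding cost_formula by linarith
qed

lemma sum_distinct_ge':
  fixes q :: "nat + nat set \<Rightarrow> nat"
  assumes "bij_betw q (Inl ` friendV n \<union> Inr ` friendE n) {1..5*n+1}"
  shows "\<Sum>{1..2*n+1} \<le> q (Inl 0) + (\<Sum>i=1..2*n. q (Inl i))"
proof -
  have inj: "inj_on (\<lambda>v. q (Inl v)) (friendV n)"
    using assms unfolding bij_betw_def inj_on_def by auto
  have "(\<lambda>v. q (Inl v)) ` friendV n \<subseteq> {1..5*n+1}"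
    using assms unfolding bij_betw_def by auto
  then have "0 \<notin> (\<lambda>v. q (Inl v)) ` friendV n" by auto
  moreover have "card ((\<lambda>v. q (Inl v)) ` friendV n) = 2*n+1"
    using card_image[OF inj] card_V by simp
  ultimately have "\<Sum>{1..2*n+1} \<le> \<Sum>((\<lambda>v. q (Inl v)) ` friendV n)"
    using sum_distinct_ge[of "(\<lambda>v. q (Inl v)) ` friendV n"] by (simp add: friendV_def)
  also have "\<dots> = (\<Sum>v\<in>friendV n. q (Inl v))" using sum.reindex[OF inj] by simp
  also have "\<dots> = q (Inl 0) + (\<Sum>i=1..2*n. q (Inl i))" unfolding V_eq by simp
  finally show ?thesis .
qed


lemma lin_help: "(D::int) \<le> a + S \<Longrightarrow> 0 \<le> P \<Longrightarrow> 2*T - 4*(a+S) - P - c \<le> 2*T - 4*D - c"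
  by simp

definition pF :: "nat \<Rightarrow> nat + nat set \<Rightarrow> nat" where
  "pF n = case_sum (\<lambda>v. v+1) (\<lambda>e. if 0 \<in> e then 2*n+1+Max e else 4*n+1 + Max e div 2)"

lemma pF_Inl: "pF n (Inl v) = v + 1" by (simp add: pF_def)

lemma pF_sp: "1 \<le> i \<Longrightarrow> pF n (Inr {0,i}) = 2*n+1+i"
  by (simp add: pF_def)

lemma pF_bs: "1 \<le> k \<Longrightarrow> pF n (Inr {2*k-1,2*k}) = 4*n+1+k"
proof -
  assume k: "1 \<le> k"
  have "0 \<notin> {2*k-1,2*k}" using k by auto
  moreover have "Max {2*k-1,2*k} = 2*k" using k by (simp add: max_def)
  ultimately show ?thesis by (simp add: pF_def)
qed

lemma img_shift: "(\<lambda>i::nat. c + i) ` {a..b} = {c+a..c+b}"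
proof (rule set_eqI, rule iffI)
  fix x assume "x \<in> {c+a..c+b}"
  then have "x = c + (x - c)" "x - c \<in> {a..b}" by auto
  then show "x \<in> (\<lambda>i::nat. c + i) ` {a..b}" by (metis image_eqI)
qed auto

lemma pF_img: "pF n ` (Inl ` friendV n \<union> Inr ` friendE n) = {1..5*n+1}"
proof -
  have a: "pF n ` Inl ` friendV n = (\<lambda>i. 1 + i) ` {0..2*n}"
    unfolding image_image pF_Inl friendV_def by simp
  have b: "pF n ` Inr ` (\<lambda>i. {0,i}) ` {1..2*n} = (\<lambda>i. (2*n+1) + i) ` {1..2*n}"
    unfolding image_image by (rule image_cong) (auto simp: pF_sp)
  have c: "pF n ` Inr ` (\<lambda>k. {2*k-1,2*k}) ` {1..n} = (\<lambda>i. (4*n+1) + i) ` {1..n}"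
    unfolding image_image
  proof (rule image_cong)
    fix k assume "k \<in> {1..n}"
    then show "pF n (Inr {2*k-1,2*k}) = (4*n+1) + k" using pF_bs[of k n] by simp
  qed simp
  have "pF n ` (Inl ` friendV n \<union> Inr ` friendE n) =
     pF n ` Inl ` friendV n \<union> pF n ` Inr ` (\<lambda>i. {0,i}) ` {1..2*n} \<union> pF n ` Inr ` (\<lambda>k. {2*k-1,2*k}) ` {1..n}"
    unfolding E_eq by (simp add: image_Un Un_assoc)
  also have "\<dots> = {1..5*n+1}" unfolding a b c img_shift by auto
  finally show ?thesis .
qed

lemma card_G: "card (Inl ` friendV n \<union> Inr ` friendE n) = 5*n+1"
proof -
  have "card (Inl ` friendV n \<union> Inr ` friendE n) = card (Inl ` friendV n :: (nat + nat set) set) + card (Inr ` friendE n :: (nat + nat set) set)"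
    by (rule card_Un_disjoint) (auto simp: friendV_def finE)
  also have "\<dots> = card (friendV n) + card (friendE n)"
    by (simp add: card_image)
  finally show ?thesis using card_V card_E by simp
qed

lemma finG: "finite (Inl ` friendV n \<union> Inr ` friendE n)"
  by (simp add: friendV_def finE)

lemma pF_bij: "bij_betw (pF n) (Inl ` friendV n \<union> Inr ` friendE n) {1..5*n+1}"
proof -
  have "inj_on (pF n) (Inl ` friendV n \<union> Inr ` friendE n)"
    by (rule eq_card_imp_inj_on[OF finG]) (use pF_img[of n] card_G[of n] in simp)
  then show ?thesis unfolding bij_betw_def using pF_img by blast
qed

lemma pF_E: "e \<in> friendE n \<Longrightarrow> 2*n+2 \<le> pF n (Inr e)"
proof -
  assume "e \<in> friendE n"
  then have "e \<in> (\<lambda>i. {0,i}) ` {1..2*n} \<or> e \<in> (\<lambda>k. {2*k-1,2*k}) ` {1..n}" unfolding E_eq by blast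
  then show ?thesis
  proof
    assume "e \<in> (\<lambda>i. {0,i}) ` {1..2*n}"
    then obtain i where "i \<in> {1..2*n}" "e = {0,i}" by blast
    then show ?thesis using pF_sp[of i n] by simp
  next
    assume "e \<in> (\<lambda>k. {2*k-1,2*k}) ` {1..n}"
    then obtain k where "k \<in> {1..n}" "e = {2*k-1,2*k}" by blast
    then show ?thesis using pF_bs[of k n] by simp
  qed
qed

lemma cost_pos:
  assumes "cseq (friendV n) (friendE n) x"
  shows "cost (friendV n) (friendE n) x =
    (\<Sum>e\<in>friendE n. 2 * int (pos (friendV n) (friendE n) x (Inr e)) - (\<Sum>u\<in>e. int (pos (friendV n) (friendE n) x (Inl u))))"
  unfolding cost_def ..

lemma pos_bij:
  assumes "cseq (friendV n) (friendE n) x"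
  shows "bij_betw (pos (friendV n) (friendE n) x) (Inl ` friendV n \<union> Inr ` friendE n) {1..5*n+1}"
  using assms unfolding cseq_def pos_def glen_F by (simp add: bij_betw_the_inv_into)

lemma upper:
  assumes "n \<ge> 1" "cseq (friendV n) (friendE n) x"
  shows "cost (friendV n) (friendE n) x \<le> 17 * int n ^ 2 + int n"
    and "- (2 * int n + 6) * int (\<Sum>{1..5*n+1}) \<le> cost (friendV n) (friendE n) x"
proof -
  let ?q = "pos (friendV n) (friendE n) x"
  have B: "bij_betw ?q (Inl ` friendV n \<union> Inr ` friendE n) {1..5*n+1}" by (rule pos_bij[OF assms(2)])
  have C: "cost (friendV n) (friendE n) x = int (2 * \<Sum>{1..5*n+1}) - (2 * int n + 2) * int (?q (Inl 0)) - 4 * (\<Sum>i=1..2*n. int (?q (Inl i)))"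
    unfolding cost_def using cost_gen[OF B] .
  have q0: "1 \<le> ?q (Inl 0)" using B unfolding bij_betw_def by (auto simp: friendV_def)
  have D: "\<Sum>{1..2*n+1} \<le> ?q (Inl 0) + (\<Sum>i=1..2*n. ?q (Inl i))" by (rule sum_distinct_ge'[OF B])
  have s: "(\<Sum>v\<in>friendV n. ?q (Inl v)) = ?q (Inl 0) + (\<Sum>i=1..2*n. ?q (Inl i))"
    unfolding V_eq by simp
  have U: "?q (Inl 0) + (\<Sum>i=1..2*n. ?q (Inl i)) \<le> \<Sum>{1..5*n+1}" using sumG[OF B] s by linarith
  let ?T = "int (\<Sum>{1..5*n+1})" and ?S = "(\<Sum>i=1..2*n. int (?q (Inl i)))" and ?a = "int (?q (Inl 0))"
  have Sint: "?S = int (\<Sum>i=1..2*n. ?q (Inl i))" by simp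
  have g1: "2 * ?T = (5 * int n + 1) * (5 * int n + 1 + 1)"
    using gauss_int[of "5*n+1"] by (simp only: of_nat_add of_nat_mult of_nat_numeral of_nat_1)
  have g2: "2 * int (\<Sum>{1..2*n+1}) = (2 * int n + 1) * (2 * int n + 1 + 1)"
    using gauss_int[of "2*n+1"] by (simp only: of_nat_add of_nat_mult of_nat_numeral of_nat_1)
  have D': "int (\<Sum>{1..2*n+1}) \<le> ?a + ?S" using D Sint by linarith
  have U': "?a + ?S \<le> ?T" using U Sint by linarith
  have m: "0 \<le> (2 * int n - 2) * (?a - 1)" using assms(1) q0 by simp
  have C': "cost (friendV n) (friendE n) x = 2 * ?T - (2 * int n + 2) * ?a - 4 * ?S" using C by simp
  show "cost (friendV n) (friendE n) x \<le> 17 * int n ^ 2 + int n"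
  proof -
    have "cost (friendV n) (friendE n) x = 2 * ?T - 4 * (?a + ?S) - (2 * int n - 2) * (?a - 1) - (2 * int n - 2)"
      unfolding C' by (simp add: algebra_simps)
    also have "\<dots> \<le> 2 * ?T - 4 * int (\<Sum>{1..2*n+1}) - (2 * int n - 2)" by (rule lin_help[OF D' m])
    also have "\<dots> = 17 * int n ^ 2 + int n" using g1 g2 by (simp add: algebra_simps power2_eq_square)
    finally show ?thesis .
  qed
  show "- (2 * int n + 6) * ?T \<le> cost (friendV n) (friendE n) x"
  proof -
    have S0: "0 \<le> ?S" by (simp add: sum_nonneg)
    have "?a \<le> ?T" using U' S0 by linarith
    then have "(2 * int n + 2) * ?a \<le> (2 * int n + 2) * ?T" by (intro mult_left_mono) auto
    moreover have "?S \<le> ?T" using U' by simp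
    moreover have "0 \<le> ?T" by (rule of_nat_0_le_iff)
    ultimately have "- (2 * int n + 6) * ?T \<le> 2 * ?T - (2 * int n + 2) * ?a - 4 * ?S"
      by (simp add: algebra_simps)
    then show ?thesis using C' by simp
  qed
qed


lemma E_sub: "e \<in> friendE n \<Longrightarrow> u \<in> e \<Longrightarrow> u \<le> 2*n"
  unfolding E_eq by auto

lemma sum_shift1: "(\<Sum>i=1..m. int (i+1)) = int (\<Sum>{1..m}) + int m"
  by (induction m) simp_all

lemma arith_final:
  fixes T S N :: int
  assumes "2*T = (5*N+1)*(5*N+1+1)" "2*S = 2*N*(2*N+1)"
  shows "2*T - (2*N+2)*1 - 4*(S+2*N) = 17*N^2+N"
proof -
  have "2*T - (2*N+2)*1 - 4*(S+2*N) = 2*T - 2*(2*S) - 10*N - 2" by simp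
  also have "\<dots> = (5*N+1)*(5*N+1+1) - 2*(2*N*(2*N+1)) - 10*N - 2" using assms by simp
  also have "\<dots> = 17*N^2+N" by (simp add: algebra_simps power2_eq_square)
  finally show ?thesis .
qed

lemma lower_ex:
  assumes "n \<ge> 1"
  shows "\<exists>x. cseq (friendV n) (friendE n) x \<and> cost (friendV n) (friendE n) x = 17 * int n ^ 2 + int n"
proof -
  let ?G = "Inl ` friendV n \<union> Inr ` friendE n"
  define x where "x = the_inv_into ?G (pF n)"
  have injp: "inj_on (pF n) ?G" using pF_bij unfolding bij_betw_def by blast
  have bx: "bij_betw x {1..5*n+1} ?G" unfolding x_def by (rule bij_betw_the_inv_into[OF pF_bij])
  have injx: "inj_on x {1..5*n+1}" using bx unfolding bij_betw_def by blast
  have posx: "pos (friendV n) (friendE n) x a = pF n a" if aG: "a \<in> ?G" for a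
  proof -
    have "x (pF n a) = a" unfolding x_def by (rule the_inv_into_f_f[OF injp aG])
    moreover have "pF n a \<in> {1..5*n+1}" using pF_img[of n] aG by blast
    ultimately show ?thesis unfolding pos_def glen_F using the_inv_into_f_eq[OF injx] by blast
  qed
  have posl: "pos (friendV n) (friendE n) x (Inl u) = u + 1" if "u \<le> 2*n" for u
    using posx[of "Inl u"] that by (simp add: friendV_def pF_Inl)
  have posr: "pos (friendV n) (friendE n) x (Inr e) = pF n (Inr e)" if "e \<in> friendE n" for e
    using posx[of "Inr e"] that by simp
  have cs: "cseq (friendV n) (friendE n) x"
    unfolding cseq_def glen_F
  proof (intro conjI ballI)
    show "bij_betw x {1..5*n+1} ?G" by (rule bx)
  next
    fix e u assume eE: "e \<in> friendE n" and ue: "u \<in> e"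
    have "u \<le> 2*n" by (rule E_sub[OF eE ue])
    then show "pos (friendV n) (friendE n) x (Inl u) < pos (friendV n) (friendE n) x (Inr e)"
      using posl posr[OF eE] pF_E[OF eE] by simp
  qed
  have "cost (friendV n) (friendE n) x =
    (\<Sum>e\<in>friendE n. 2 * int (pF n (Inr e)) - (\<Sum>u\<in>e. int (pF n (Inl u))))"
    unfolding cost_def
  proof (rule sum.cong)
    fix e assume eE: "e \<in> friendE n"
    have "(\<Sum>u\<in>e. int (pos (friendV n) (friendE n) x (Inl u))) = (\<Sum>u\<in>e. int (pF n (Inl u)))"
      by (rule sum.cong) (use posl E_sub[OF eE] in \<open>simp_all add: pF_Inl\<close>)
    then show "2 * int (pos (friendV n) (friendE n) x (Inr e)) - (\<Sum>u\<in>e. int (pos (friendV n) (friendE n) x (Inl u)))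
       = 2 * int (pF n (Inr e)) - (\<Sum>u\<in>e. int (pF n (Inl u)))" using posr[OF eE] by simp
  qed simp
  also have "\<dots> = int (2 * \<Sum>{1..5*n+1}) - (2 * int n + 2) * int (pF n (Inl 0)) - 4 * (\<Sum>i=1..2*n. int (pF n (Inl i)))"
    by (rule cost_gen[OF pF_bij])
  also have "\<dots> = 2 * int (\<Sum>{1..5*n+1}) - (2 * int n + 2) * 1 - 4 * (int (\<Sum>{1..2*n}) + 2 * int n)"
    unfolding pF_Inl sum_shift1 by simp
  also have "\<dots> = 17 * int n ^ 2 + int n"
  proof (rule arith_final)
    show "2 * int (\<Sum>{1..5*n+1}) = (5 * int n + 1) * (5 * int n + 1 + 1)"
      using gauss_int[of "5*n+1"] by (simp only: of_nat_add of_nat_mult of_nat_numeral of_nat_1)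
    show "2 * int (\<Sum>{1..2*n}) = 2 * int n * (2 * int n + 1)"
      using gauss_int[of "2*n"] by (simp only: of_nat_add of_nat_mult of_nat_numeral of_nat_1)
  qed
  finally show ?thesis using cs by blast
qed

theorem theorem15:
  fixes n :: nat
  assumes "n \<ge> 1"
  shows "nu_star (friendV n) (friendE n) = 17 * int n ^ 2 + int n"
proof -
  let ?C = "{cost (friendV n) (friendE n) x | x. cseq (friendV n) (friendE n) x}"
  have sub: "?C \<subseteq> {- (2 * int n + 6) * int (\<Sum>{1..5*n+1}) .. 17 * int n ^ 2 + int n}"
    using upper[OF assms] by auto
  have fin: "finite ?C" by (rule finite_subset[OF sub]) simp
  obtain x where x1: "cseq (friendV n) (friendE n) x" and x2: "cost (friendV n) (friendE n) x = 17 * int n ^ 2 + int n"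
    using lower_ex[OF assms] by blast
  have mem: "17 * int n ^ 2 + int n \<in> ?C"
    unfolding mem_Collect_eq using x1 x2 by metis
  have "Max ?C = 17 * int n ^ 2 + int n"
    by (rule Max_eqI[OF fin]) (use sub mem in auto)
  then show ?thesis unfolding nu_star_def .
qed

end
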